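(* For any vector field $X$ on $M$, $$\tau\big(\Phi(X), \nabla^{E'}_X\Phi'(X)\big) = -\tfrac{1}{2}D_M[X|XX],\qquad \tau\big(\Phi(X), \nabla^{E'}_X\nabla^{E'}_X\Phi'(X)\big) = -\tfrac{1}{2}D_M[X|XXX].$$
   Context: Let $\mathbb{R}^{2n+1}$ have coordinates $(\mathbf{x},\mathbf{p},z)$ and contact form $\theta=dz-\sum_ip_i\,dx_i$. A quasi-Hessian manifold $M$ is obtained by gluing Legendre submanifolds $L\subset\mathbb{R}^{2n+1}$ (local models) via affine Legendre equivalences. On each local model, $\pi^e:(\mathbf{x},\mathbf{p},z)\mapsto(\mathbf{x},z)$ and $\pi^m:(\mathbf{x},\mathbf{p},z)\mapsto(\mathbf{p},z')$ with $z'=\mathbf{p}^T\mathbf{x}-z$; $E=\{(q,w):dz(w)-\mathbf{p}(q)^Td\mathbf{x}(w)=0\}\subset L\times(\mathbb{R}^n_{\mathbf{x}}\times\mathbb{R}_z)$ with $\Phi=d\pi^e:TL\to E$ and flat connection $\nabla^E$ (flat frame $s_i=\partial/\partial x_i+p_i\,\partial/\partial z$), and analogously $E'$ with $\Phi'=d\pi^m$ and flat connection $\nabla^{E'}$ (flat frame $s_i^*=\partial/\partial p_i+x_i\,\partial/\partial z'$); these glue to bundles on $M$. $\tau=\sum_i dx_i\,dp_i$ (symmetrized), $\tau(s_i,s_j^* )=\tfrac12\delta_{ij}$, and $\tau(\eta,\zeta')$ means $\tau(\eta\oplus0,0\oplus\zeta')$. The canonical divergence on a local model is $D(p,q)=z(p)+z'(q)-\mathbf{x}(p)^T\mathbf{p}(q)$;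 it is invariant under affine Legendre equivalences and defines $D_M:M\times M\to\mathbb{R}$ (locally). For a function $\rho$ on $M\times M$, $\rho[X_1\cdots X_k|Y_1\cdots Y_l](r)=(X_1)_p\cdots(X_k)_p(Y_1)_q\cdots(Y_l)_q\,\rho(p,q)\big|_{p=q=r}$. *)

theory Defs
  imports "HOL-Analysis.Analysis"
begin

text \<open>A Legendre submanifold L of R^(2n+1) is described by a
  smooth embedded parametrisation u \<mapsto> (x(u), p(u), z(u)) of an open set U of R^n
  (a local chart of a local model of M).\<close>

fun Ck_on :: "nat \<Rightarrow> ('a::real_normed_vector) set \<Rightarrow> ('a \<Rightarrow> 'b::real_normed_vector) \<Rightarrow> bool" where
  "Ck_on 0 U f = continuous_on U f"
| "Ck_on (Suc k) U f = (f differentiable_on U \<and>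
      (\<forall>v. Ck_on k U (\<lambda>u. frechet_derivative f (at u) v)))"

definition smooth_on :: "('a::real_normed_vector) set \<Rightarrow> ('a \<Rightarrow> 'b::real_normed_vector) \<Rightarrow> bool" where
  "smooth_on U f \<longleftrightarrow> (\<forall>k. Ck_on k U f)"

definition vf_deriv :: "('a::real_normed_vector \<Rightarrow> 'a) \<Rightarrow> ('a \<Rightarrow> 'b::real_normed_vector) \<Rightarrow> 'a \<Rightarrow> 'b" where
  "vf_deriv X f u = frechet_derivative f (at u) (X u)"

definition zprime :: "('a \<Rightarrow> real^'n) \<Rightarrow> ('a \<Rightarrow> real^'n) \<Rightarrow> ('a \<Rightarrow> real) \<Rightarrow> 'a \<Rightarrow> real" where
  "zprime xf pf zf u = pf u \<bullet> xf u - zf u"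

(* Phi(X) = d pi^e (X) \<in> E \<subseteq> R^n_x \<times> R_z *)
definition PhiE :: "('a \<Rightarrow> real^'n) \<Rightarrow> ('a \<Rightarrow> real) \<Rightarrow> ('a::real_normed_vector \<Rightarrow> 'a) \<Rightarrow> 'a \<Rightarrow> (real^'n) \<times> real" where
  "PhiE xf zf X u = (vf_deriv X xf u, vf_deriv X zf u)"

(* Phi'(X) = d pi^m (X) \<in> E' \<subseteq> R^n_p \<times> R_z' *)
definition PhiE' :: "('a \<Rightarrow> real^'n) \<Rightarrow> ('a \<Rightarrow> real^'n) \<Rightarrow> ('a \<Rightarrow> real) \<Rightarrow> ('a::real_normed_vector \<Rightarrow> 'a) \<Rightarrow> 'a \<Rightarrow> (real^'n) \<times> real" where
  "PhiE' xf pf zf X u = (vf_deriv X pf u, vf_deriv X (zprime xf pf zf) u)"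

(* flat connection on E': a section \<sigma> = \<Sum> a_i s_i^* with s_i^* = d/dp_i + x_i d/dz'
   has frame coefficients a = p-component of \<sigma>; \<nabla>_X \<sigma> = \<Sum> X(a_i) s_i^* *)
definition nablaE' :: "('a \<Rightarrow> real^'n) \<Rightarrow> ('a::real_normed_vector \<Rightarrow> 'a) \<Rightarrow> ('a \<Rightarrow> (real^'n) \<times> real) \<Rightarrow> 'a \<Rightarrow> (real^'n) \<times> real" where
  "nablaE' xf X \<sigma> u = (let a = vf_deriv X (\<lambda>v. fst (\<sigma> v)) u in (a, xf u \<bullet> a))"

(* tau = \<Sum> dx_i dp_i (symmetrized) on (R^n_x \<times> R_z) \<oplus> (R^n_p \<times> R_z') *)
definition tau :: "(((real^'n) \<times> real) \<times> ((real^'n) \<times> real)) \<Rightarrow> (((real^'n) \<times> real) \<times> ((real^'n) \<times> real)) \<Rightarrow> real" where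
  "tau v w = (1/2) * (\<Sum>i\<in>UNIV. fst (fst v) $ i * fst (snd w) $ i + fst (fst w) $ i * fst (snd v) $ i)"

definition tau_mixed :: "((real^'n) \<times> real) \<Rightarrow> ((real^'n) \<times> real) \<Rightarrow> real" where
  "tau_mixed \<eta> \<zeta> = tau (\<eta>, 0) (0, \<zeta>)"

definition canon_div :: "('a \<Rightarrow> real^'n) \<Rightarrow> ('a \<Rightarrow> real^'n) \<Rightarrow> ('a \<Rightarrow> real) \<Rightarrow> 'a \<Rightarrow> 'a \<Rightarrow> real" where
  "canon_div xf pf zf a b = zf a + zprime xf pf zf b - xf a \<bullet> pf b"

definition pd1 :: "('a::real_normed_vector \<Rightarrow> 'a) \<Rightarrow> ('a \<Rightarrow> 'a \<Rightarrow> real) \<Rightarrow> 'a \<Rightarrow> 'a \<Rightarrow> real" where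
  "pd1 X \<rho> a b = vf_deriv X (\<lambda>a'. \<rho> a' b) a"

definition pd2 :: "('a::real_normed_vector \<Rightarrow> 'a) \<Rightarrow> ('a \<Rightarrow> 'a \<Rightarrow> real) \<Rightarrow> 'a \<Rightarrow> 'a \<Rightarrow> real" where
  "pd2 Y \<rho> a b = vf_deriv Y (\<lambda>b'. \<rho> a b') b"

(* \<rho>[X1..Xk | Y1..Yl](r) = (X1)_p..(Xk)_p (Y1)_q..(Yl)_q \<rho>(p,q) at p = q = r *)
definition bracket :: "('a::real_normed_vector \<Rightarrow> 'a \<Rightarrow> real) \<Rightarrow> ('a \<Rightarrow> 'a) list \<Rightarrow> ('a \<Rightarrow> 'a) list \<Rightarrow> 'a \<Rightarrow> real" where
  "bracket \<rho> Xs Ys r = foldr pd1 Xs (foldr pd2 Ys \<rho>) r r"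

end

theory Submission
  imports Defs
begin

lemma Ck_mono: "Ck_on (Suc k) U f \<Longrightarrow> Ck_on k U f"
proof (induction k arbitrary: f)
  case 0 then show ?case by (simp add: differentiable_imp_continuous_on)
next
  case (Suc k) then show ?case by simp
qed

lemma fd_cong:
  assumes "open U" "u \<in> U" "f differentiable at u" "\<forall>x\<in>U. f x = g x"
  shows "frechet_derivative g (at u) = frechet_derivative f (at u)"
proof -
  have "(f has_derivative frechet_derivative f (at u)) (at u)"
    using assms(3) frechet_derivative_works by blast
  then have "(g has_derivative frechet_derivative f (at u)) (at u)"
    by (rule has_derivative_transform_within_open[OF _ assms(1,2)]) (use assms(4) in simp)
  then show ?thesis by (rule frechet_derivative_at[symmetric])
qed

lemma diff_cong:
  assumes "open U" "u \<in> U" "f differentiable at u" "\<forall>x\<in>U. f x = g x"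
  shows "g differentiable at u"
proof -
  obtain f' where "(f has_derivative f') (at u)" using assms(3) unfolding differentiable_def by blast
  then have "(g has_derivative f') (at u)"
    by (rule has_derivative_transform_within_open[OF _ assms(1,2)]) (use assms(4) in simp)
  then show ?thesis unfolding differentiable_def by blast
qed

lemma Ck_cong:
  "open U \<Longrightarrow> Ck_on k U f \<Longrightarrow> \<forall>x\<in>U. f x = g x \<Longrightarrow> Ck_on k U g"
proof (induction k arbitrary: f g)
  case 0 then show ?case using continuous_on_cong[of U U f g] by simp
next
  case (Suc k)
  have d: "\<forall>u\<in>U. f differentiable at u"
    using Suc.prems differentiable_on_eq_differentiable_at by auto
  have "g differentiable_on U"
    unfolding differentiable_on_eq_differentiable_at[OF Suc.prems(1)]
    using diff_cong[OF Suc.prems(1) _ _ Suc.prems(3)] d by blast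
  moreover have "Ck_on k U (\<lambda>u. frechet_derivative g (at u) v)" for v
  proof -
    have "Ck_on k U (\<lambda>u. frechet_derivative f (at u) v)" using Suc.prems by simp
    moreover have "\<forall>u\<in>U. frechet_derivative f (at u) v = frechet_derivative g (at u) v"
      using fd_cong[OF Suc.prems(1) _ _ Suc.prems(3)] d by simp
    ultimately show ?thesis by (rule Suc.IH[OF Suc.prems(1)])
  qed
  ultimately show ?case by simp
qed

lemma Ck_add:
  "open U \<Longrightarrow> Ck_on k U f \<Longrightarrow> Ck_on k U g \<Longrightarrow> Ck_on k U (\<lambda>u. f u + g u)"
proof (induction k arbitrary: f g)
  case 0 then show ?case by (simp add: continuous_on_add)
next
  case (Suc k)
  have df: "\<forall>u\<in>U. f differentiable at u" and dg: "\<forall>u\<in>U. g differentiable at u"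
    using Suc.prems differentiable_on_eq_differentiable_at by auto
  have "(\<lambda>u. f u + g u) differentiable_on U"
    using Suc.prems by (simp add: differentiable_on_add)
  moreover have "Ck_on k U (\<lambda>u. frechet_derivative (\<lambda>u. f u + g u) (at u) v)" for v
  proof -
    have "Ck_on k U (\<lambda>u. frechet_derivative f (at u) v + frechet_derivative g (at u) v)"
      using Suc.IH Suc.prems by simp
    moreover have "\<forall>u\<in>U. frechet_derivative f (at u) v + frechet_derivative g (at u) v
        = frechet_derivative (\<lambda>u. f u + g u) (at u) v"
    proof
      fix u assume "u \<in> U"
      have hh: "((\<lambda>u. f u + g u) has_derivative
          (\<lambda>w. frechet_derivative f (at u) w + frechet_derivative g (at u) w)) (at u)"
      proof (rule has_derivative_add)
        show "(f has_derivative frechet_derivative f (at u)) (at u)"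
          using df \<open>u \<in> U\<close> frechet_derivative_works by blast
        show "(g has_derivative frechet_derivative g (at u)) (at u)"
          using dg \<open>u \<in> U\<close> frechet_derivative_works by blast
      qed
      then show "frechet_derivative f (at u) v + frechet_derivative g (at u) v
        = frechet_derivative (\<lambda>u. f u + g u) (at u) v"
        using fun_cong[OF frechet_derivative_at[OF hh], of v] by simp
    qed
    ultimately show ?thesis by (rule Ck_cong[OF Suc.prems(1)])
  qed
  ultimately show ?case by simp
qed

lemma Ck_const:
  fixes U :: "'a::real_normed_vector set" and c :: "'b::real_normed_vector"
  shows "Ck_on k U (\<lambda>u. c)"
proof (induction k arbitrary: c)
  case 0 then show ?case by simp
next
  case (Suc k)
  have "(\<lambda>u. frechet_derivative (\<lambda>u::'a. c) (at u) v) = (\<lambda>u::'a. 0::'b)" for v :: 'a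
  proof
    fix u :: 'a
    have hh: "((\<lambda>u::'a. c) has_derivative (\<lambda>w. 0)) (at u)" by simp
    then show "frechet_derivative (\<lambda>u::'a. c) (at u) v = 0" using fun_cong[OF frechet_derivative_at[OF hh], of v] by simp
  qed
  then show ?case using Suc.IH by simp
qed

lemma Ck_sum:
  assumes "open U" "finite S" "\<forall>i\<in>S. Ck_on k U (f i)"
  shows "Ck_on k U (\<lambda>u. \<Sum>i\<in>S. f i u)"
  using assms(2,3)
proof (induction S rule: finite_induct)
  case empty then show ?case by (simp add: Ck_const)
next
  case (insert x F) then show ?case using Ck_add[OF assms(1), of k "f x"] by simp
qed

lemma (in bounded_bilinear) Ck_prod:
  "open U \<Longrightarrow> Ck_on k U f \<Longrightarrow> Ck_on k U g \<Longrightarrow> Ck_on k U (\<lambda>u. prod (f u) (g u))"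
proof (induction k arbitrary: f g)
  case 0 then show ?case by (simp add: continuous_on)
next
  case (Suc k)
  have df: "\<forall>u\<in>U. f differentiable at u" and dg: "\<forall>u\<in>U. g differentiable at u"
    using Suc.prems differentiable_on_eq_differentiable_at by auto
  have hd: "((\<lambda>u. prod (f u) (g u)) has_derivative
          (\<lambda>w. prod (f u) (frechet_derivative g (at u) w) + prod (frechet_derivative f (at u) w) (g u))) (at u)"
    if "u \<in> U" for u
  proof -
    have "(f has_derivative frechet_derivative f (at u)) (at u)"
      using df that frechet_derivative_works by blast
    moreover have "(g has_derivative frechet_derivative g (at u)) (at u)"
      using dg that frechet_derivative_works by blast
    ultimately show ?thesis by (rule FDERIV)
  qed
  have "(\<lambda>u. prod (f u) (g u)) differentiable_on U"
    using hd Suc.prems(1) differentiable_on_eq_differentiable_at unfolding differentiable_def by blast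
  moreover have "Ck_on k U (\<lambda>u. frechet_derivative (\<lambda>u. prod (f u) (g u)) (at u) v)" for v
  proof -
    have "Ck_on k U (\<lambda>u. prod (f u) (frechet_derivative g (at u) v) + prod (frechet_derivative f (at u) v) (g u))"
    proof (rule Ck_add[OF Suc.prems(1)])
      have fk: "Ck_on k U f" using Suc.prems(2) Ck_mono by blast
      have gk: "Ck_on k U g" using Suc.prems(3) Ck_mono by blast
      show "Ck_on k U (\<lambda>u. prod (f u) (frechet_derivative g (at u) v))"
        using Suc.IH[OF Suc.prems(1) fk] Suc.prems(3) by simp
      show "Ck_on k U (\<lambda>u. prod (frechet_derivative f (at u) v) (g u))"
        using Suc.IH[OF Suc.prems(1) _ gk] Suc.prems(2) by simp
    qed
    moreover have "\<forall>u\<in>U. prod (f u) (frechet_derivative g (at u) v) + prod (frechet_derivative f (at u) v) (g u)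
        = frechet_derivative (\<lambda>u. prod (f u) (g u)) (at u) v"
    proof
      fix u assume u: "u \<in> U"
      show "prod (f u) (frechet_derivative g (at u) v) + prod (frechet_derivative f (at u) v) (g u)
        = frechet_derivative (\<lambda>u. prod (f u) (g u)) (at u) v"
        using fun_cong[OF frechet_derivative_at[OF hd[OF u]], of v] by simp
    qed
    ultimately show ?thesis by (rule Ck_cong[OF Suc.prems(1)])
  qed
  ultimately show ?case by simp
qed

lemma fd_basis:
  fixes f :: "'a::euclidean_space \<Rightarrow> 'b::real_normed_vector"
  assumes "f differentiable at u"
  shows "frechet_derivative f (at u) w = (\<Sum>b\<in>Basis. (w \<bullet> b) *\<^sub>R frechet_derivative f (at u) b)"
proof -
  have "linear (frechet_derivative f (at u))"
    using assms frechet_derivative_works has_derivative_linear by blast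
  then have "frechet_derivative f (at u) (\<Sum>b\<in>Basis. (w \<bullet> b) *\<^sub>R b)
     = (\<Sum>b\<in>Basis. (w \<bullet> b) *\<^sub>R frechet_derivative f (at u) b)"
    by (simp add: linear_sum linear_scale)
  then show ?thesis by (simp add: euclidean_representation)
qed

lemma Ck_vf:
  fixes f :: "'a::euclidean_space \<Rightarrow> 'b::real_normed_vector"
  assumes "open U" "Ck_on (Suc k) U f" "Ck_on k U X"
  shows "Ck_on k U (vf_deriv X f)"
proof -
  have df: "\<forall>u\<in>U. f differentiable at u"
    using assms differentiable_on_eq_differentiable_at by auto
  have "Ck_on k U (\<lambda>u. \<Sum>b\<in>Basis. (X u \<bullet> b) *\<^sub>R frechet_derivative f (at u) b)"
  proof (rule Ck_sum[OF assms(1)], simp, intro ballI)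
    fix b :: 'a
    have "Ck_on k U (\<lambda>u. X u \<bullet> b)"
      using bounded_bilinear.Ck_prod[OF bounded_bilinear_inner assms(1) assms(3) Ck_const] .
    moreover have "Ck_on k U (\<lambda>u. frechet_derivative f (at u) b)" using assms(2) by simp
    ultimately show "Ck_on k U (\<lambda>u. (X u \<bullet> b) *\<^sub>R frechet_derivative f (at u) b)"
      using bounded_bilinear.Ck_prod[OF bounded_bilinear_scaleR assms(1)] by blast
  qed
  moreover have "\<forall>u\<in>U. (\<Sum>b\<in>Basis. (X u \<bullet> b) *\<^sub>R frechet_derivative f (at u) b) = vf_deriv X f u"
    unfolding vf_deriv_def
  proof
    fix u assume u: "u \<in> U"
    show "(\<Sum>b\<in>Basis. (X u \<bullet> b) *\<^sub>R frechet_derivative f (at u) b) = frechet_derivative f (at u) (X u)"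
      using fd_basis[OF df[rule_format, OF u], of "X u"] by simp
  qed
  ultimately show ?thesis by (rule Ck_cong[OF assms(1)])
qed

lemma smooth_vf:
  fixes f :: "'a::euclidean_space \<Rightarrow> 'b::real_normed_vector"
  shows "open U \<Longrightarrow> smooth_on U f \<Longrightarrow> smooth_on U X \<Longrightarrow> smooth_on U (vf_deriv X f)"
  unfolding smooth_on_def using Ck_vf by blast

lemma smooth_diffable:
  "open U \<Longrightarrow> smooth_on U f \<Longrightarrow> u \<in> U \<Longrightarrow> f differentiable at u"
  unfolding smooth_on_def
proof -
  assume a: "open U" "\<forall>k. Ck_on k U f" "u \<in> U"
  have "Ck_on (Suc 0) U f" using a(2) by blast
  then have "f differentiable_on U" by simp
  then show ?thesis using differentiable_on_eq_differentiable_at[OF a(1)] a(3) by blast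
qed

lemma smooth_zprime:
  fixes xf pf :: "'a::euclidean_space \<Rightarrow> real^'n" and zf :: "'a \<Rightarrow> real"
  assumes "open U" "smooth_on U xf" "smooth_on U pf" "smooth_on U zf"
  shows "smooth_on U (zprime xf pf zf)"
  unfolding smooth_on_def
proof
  fix k
  have "Ck_on k U (\<lambda>u. pf u \<bullet> xf u)"
    using bounded_bilinear.Ck_prod[OF bounded_bilinear_inner assms(1)] assms smooth_on_def by blast
  moreover have "Ck_on k U (\<lambda>u. (-1::real) *\<^sub>R zf u)"
    using bounded_bilinear.Ck_prod[OF bounded_bilinear_scaleR assms(1) Ck_const] assms smooth_on_def by blast
  ultimately have "Ck_on k U (\<lambda>u. pf u \<bullet> xf u + (-1::real) *\<^sub>R zf u)"
    using Ck_add assms(1) by blast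
  moreover have "(\<lambda>u. pf u \<bullet> xf u + (-1::real) *\<^sub>R zf u) = zprime xf pf zf"
    by (auto simp: zprime_def)
  ultimately show "Ck_on k U (zprime xf pf zf)" by simp
qed

lemma G2:
  fixes c1 :: "'a::real_normed_vector \<Rightarrow> real" and c2 :: "'a \<Rightarrow> 'b::real_inner"
  assumes "open U" "b \<in> U" "\<forall>b'\<in>U. F b' = k + c1 b' - v \<bullet> c2 b'"
    "c1 differentiable at b" "c2 differentiable at b"
  shows "vf_deriv X F b = vf_deriv X c1 b - v \<bullet> vf_deriv X c2 b"
proof -
  have "((\<lambda>b'. k + c1 b' - v \<bullet> c2 b') has_derivative
     (\<lambda>w. 0 + frechet_derivative c1 (at b) w - v \<bullet> frechet_derivative c2 (at b) w)) (at b)"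
    using assms(4,5) unfolding frechet_derivative_works
    by (intro derivative_intros)
  then have "(F has_derivative
     (\<lambda>w. 0 + frechet_derivative c1 (at b) w - v \<bullet> frechet_derivative c2 (at b) w)) (at b)"
    by (rule has_derivative_transform_within_open[OF _ assms(1,2)]) (use assms(3) in simp)
  from fun_cong[OF frechet_derivative_at[OF this], of "X b"] show ?thesis unfolding vf_deriv_def by simp
qed

lemma G1:
  fixes f :: "'a::real_normed_vector \<Rightarrow> 'b::real_inner"
  assumes "f differentiable at a"
  shows "vf_deriv X (\<lambda>a'. k - f a' \<bullet> w) a = - (vf_deriv X f a \<bullet> w)"
proof -
  have "((\<lambda>a'. k - f a' \<bullet> w) has_derivative
     (\<lambda>h. 0 - frechet_derivative f (at a) h \<bullet> w)) (at a)"
    using assms unfolding frechet_derivative_works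
    by (intro derivative_intros)
  from fun_cong[OF frechet_derivative_at[OF this], of "X a"] show ?thesis unfolding vf_deriv_def by simp
qed

lemma tau_mixed_eq: "tau_mixed \<eta> \<zeta> = (1/2) * (fst \<eta> \<bullet> fst \<zeta>)"
  unfolding tau_mixed_def tau_def by (simp add: inner_vec_def)

theorem corollary4p3:
  fixes U :: "(real^'n) set"
    and xf pf :: "real^'n \<Rightarrow> real^'n"
    and zf :: "real^'n \<Rightarrow> real"
    and X :: "real^'n \<Rightarrow> real^'n"
  assumes "open U"
    and "smooth_on U xf" "smooth_on U pf" "smooth_on U zf"
    and legendre: "\<forall>u\<in>U. \<forall>w. frechet_derivative zf (at u) w = pf u \<bullet> frechet_derivative xf (at u) w"
    and immersion: "\<forall>u\<in>U. inj (frechet_derivative (\<lambda>v. (xf v, pf v, zf v)) (at u))"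
    and embedding: "\<exists>g. homeomorphism U ((\<lambda>v. (xf v, pf v, zf v)) ` U) (\<lambda>v. (xf v, pf v, zf v)) g"
    and "smooth_on U X"
  shows "\<forall>r\<in>U.
     tau_mixed (PhiE xf zf X r) (nablaE' xf X (PhiE' xf pf zf X) r)
       = - (1/2) * bracket (canon_div xf pf zf) [X] [X, X] r
   \<and> tau_mixed (PhiE xf zf X r) (nablaE' xf X (nablaE' xf X (PhiE' xf pf zf X)) r)
       = - (1/2) * bracket (canon_div xf pf zf) [X] [X, X, X] r"
proof
  fix r assume r: "r \<in> U"
  let ?D = "vf_deriv X"
  let ?zp = "zprime xf pf zf"
  let ?cd = "canon_div xf pf zf"
  note o = assms(1)
  note sX = assms(8)
  have szp: "smooth_on U ?zp" using smooth_zprime[OF assms(1-4)] .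
  have s1: "smooth_on U (?D ?zp)" "smooth_on U (?D pf)"
    using smooth_vf[OF o szp sX] smooth_vf[OF o assms(3) sX] .
  have s2: "smooth_on U (?D (?D ?zp))" "smooth_on U (?D (?D pf))"
    using smooth_vf[OF o s1(1) sX] smooth_vf[OF o s1(2) sX] .
  have s3: "smooth_on U (?D (?D (?D ?zp)))" "smooth_on U (?D (?D (?D pf)))"
    using smooth_vf[OF o s2(1) sX] smooth_vf[OF o s2(2) sX] .
  have F1: "\<forall>b\<in>U. pd2 X ?cd a b = ?D ?zp b - xf a \<bullet> ?D pf b" for a
    unfolding pd2_def
    proof
    fix b assume b: "b \<in> U"
    show "?D (\<lambda>b'. ?cd a b') b = ?D ?zp b - xf a \<bullet> ?D pf b"
      by (rule G2[OF o b, where k="zf a"]) (auto simp: canon_div_def intro: smooth_diffable[OF o szp b] smooth_diffable[OF o assms(3) b])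
  qed
  have F2: "\<forall>b\<in>U. pd2 X (pd2 X ?cd) a b = ?D (?D ?zp) b - xf a \<bullet> ?D (?D pf) b" for a
    unfolding pd2_def[of X "pd2 X ?cd"]
    proof
    fix b assume b: "b \<in> U"
    show "?D (\<lambda>b'. pd2 X ?cd a b') b = ?D (?D ?zp) b - xf a \<bullet> ?D (?D pf) b"
      by (rule G2[OF o b, where k=0]) (auto simp: F1 intro: smooth_diffable[OF o s1(1) b] smooth_diffable[OF o s1(2) b])
  qed
  have F3: "\<forall>b\<in>U. pd2 X (pd2 X (pd2 X ?cd)) a b = ?D (?D (?D ?zp)) b - xf a \<bullet> ?D (?D (?D pf)) b" for a
    unfolding pd2_def[of X "pd2 X (pd2 X ?cd)"]
    proof
    fix b assume b: "b \<in> U"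
    show "?D (\<lambda>b'. pd2 X (pd2 X ?cd) a b') b = ?D (?D (?D ?zp)) b - xf a \<bullet> ?D (?D (?D pf)) b"
      by (rule G2[OF o b, where k=0]) (auto simp: F2 intro: smooth_diffable[OF o s2(1) b] smooth_diffable[OF o s2(2) b])
  qed
  have dx: "xf differentiable at r" using smooth_diffable[OF o assms(2) r] .
  have B1: "bracket ?cd [X] [X, X] r = - (?D xf r \<bullet> ?D (?D pf) r)"
  proof -
    have "bracket ?cd [X] [X, X] r = ?D (\<lambda>a'. pd2 X (pd2 X ?cd) a' r) r"
      by (simp add: bracket_def pd1_def)
    also have "(\<lambda>a'. pd2 X (pd2 X ?cd) a' r) = (\<lambda>a'. ?D (?D ?zp) r - xf a' \<bullet> ?D (?D pf) r)"
      by (rule ext) (simp add: F2 r)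
    finally show ?thesis using G1[OF dx] by simp
  qed
  have B2: "bracket ?cd [X] [X, X, X] r = - (?D xf r \<bullet> ?D (?D (?D pf)) r)"
  proof -
    have "bracket ?cd [X] [X, X, X] r = ?D (\<lambda>a'. pd2 X (pd2 X (pd2 X ?cd)) a' r) r"
      by (simp add: bracket_def pd1_def)
    also have "(\<lambda>a'. pd2 X (pd2 X (pd2 X ?cd)) a' r) = (\<lambda>a'. ?D (?D (?D ?zp)) r - xf a' \<bullet> ?D (?D (?D pf)) r)"
      by (rule ext) (simp add: F3 r)
    finally show ?thesis using G1[OF dx] by simp
  qed
  have e1: "(\<lambda>v. fst (PhiE' xf pf zf X v)) = ?D pf" by (auto simp: PhiE'_def)
  have e2: "(\<lambda>v. fst (nablaE' xf X (PhiE' xf pf zf X) v)) = ?D (?D pf)"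
    by (auto simp: nablaE'_def e1 Let_def)
  show "tau_mixed (PhiE xf zf X r) (nablaE' xf X (PhiE' xf pf zf X) r)
       = - (1/2) * bracket ?cd [X] [X, X] r
   \<and> tau_mixed (PhiE xf zf X r) (nablaE' xf X (nablaE' xf X (PhiE' xf pf zf X)) r)
       = - (1/2) * bracket ?cd [X] [X, X, X] r"
    unfolding B1 B2 tau_mixed_eq
    by (simp add: PhiE_def nablaE'_def Let_def e1 e2)
qed

end
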